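(* Let $p\ge2$ and $\delta>0$, and let $n$ be sufficiently large. Let $G$ be a graph on $n$ vertices and let $V(G)=V_1\cup\dots\cup V_p$ be a partition with $|E(V_1)|+\dots+|E(V_p)|<\delta^2n^2$. Then at most $2^{t(n,p)-1}$ orientations of $G$ are not relevant (with respect to this partition and $\delta$).
   Context: $E(V_i)$ is the set of edges of $G$ with both ends in $V_i$; $t(n,p)$ is the number of edges of the complete balanced $p$-partite graph on $n$ vertices. Given a partition $V(G)=V_1\cup\dots\cup V_p$ and $\delta>0$, an orientation $\vec G$ of $G$ is relevant if for every $i\neq j$ and all $X_1\subseteq V_i$, $X_2\subseteq V_j$ with $|X_1|,|X_2|>2\delta n$, there are at least $|X_1||X_2|/10$ edges of $\vec G$ directed from $X_1$ to $X_2$. *)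

theory Defs
  imports Complex_Main
begin

definition simple_graph :: "'a set \<Rightarrow> 'a set set \<Rightarrow> bool" where
  "simple_graph V E \<longleftrightarrow> finite V \<and> (\<forall>e\<in>E. e \<subseteq> V \<and> card e = 2)"

definition is_partition :: "'a set \<Rightarrow> nat \<Rightarrow> (nat \<Rightarrow> 'a set) \<Rightarrow> bool" where
  "is_partition V p P \<longleftrightarrow> (\<Union>i<p. P i) = V \<and>
     (\<forall>i<p. \<forall>j<p. i \<noteq> j \<longrightarrow> P i \<inter> P j = {})"

definition edges_in :: "'a set set \<Rightarrow> 'a set \<Rightarrow> 'a set set" where
  "edges_in E U = {e \<in> E. e \<subseteq> U}"

definition orientations :: "'a set set \<Rightarrow> ('a \<times> 'a) set set" where
  "orientations E = {D. (\<forall>(u,v)\<in>D. {u,v} \<in> E) \<and>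
     (\<forall>u v. {u,v} \<in> E \<longrightarrow> ((u,v) \<in> D \<longleftrightarrow> (v,u) \<notin> D))}"

text \<open>t(n,p): number of edges of the complete balanced p-partite graph on n vertices,
  realised on vertices 0..n-1 with part of i given by i mod p.\<close>
definition turan_num :: "nat \<Rightarrow> nat \<Rightarrow> nat" where
  "turan_num n p = card {(i,j). i < j \<and> j < n \<and> i mod p \<noteq> j mod p}"

definition relevant :: "nat \<Rightarrow> real \<Rightarrow> nat \<Rightarrow> (nat \<Rightarrow> 'a set) \<Rightarrow> ('a \<times> 'a) set \<Rightarrow> bool" where
  "relevant n \<delta> p P D \<longleftrightarrow>
     (\<forall>i<p. \<forall>j<p. i \<noteq> j \<longrightarrow>
       (\<forall>X1 X2. X1 \<subseteq> P i \<longrightarrow> X2 \<subseteq> P j \<longrightarrow>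
          real (card X1) > 2 * \<delta> * real n \<longrightarrow> real (card X2) > 2 * \<delta> * real n \<longrightarrow>
          real (card {(u,v) \<in> D. u \<in> X1 \<and> v \<in> X2}) \<ge> real (card X1) * real (card X2) / 10))"

end

theory Submission imports Defs "HOL-Analysis.Analysis" "HOL-Analysis.Harmonic_Numbers" begin


lemma part_count:
  fixes V :: "'a::linorder set"
  assumes fin: "finite V" and part: "is_partition V p P"
  shows "2 * card {(u,v)\<in>V\<times>V. u<v \<and> (\<forall>i<p. \<not>(u\<in>P i \<and> v\<in>P i))} + (\<Sum>i<p. card (P i)^2) = card V^2"
proof -
  define Ob where "Ob = {(u,v)\<in>V\<times>V. u<v \<and> (\<forall>i<p. \<not>(u\<in>P i \<and> v\<in>P i))}"
  define Ob' where "Ob' = (\<lambda>(u,v). (v,u)) ` Ob"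
  define S where "S = (\<Union>i<p. P i \<times> P i)"
  have cov: "(\<Union>i<p. P i) = V" and dis: "\<And>i j. i<p \<Longrightarrow> j<p \<Longrightarrow> i\<noteq>j \<Longrightarrow> P i \<inter> P j = {}"
    using part by (auto simp: is_partition_def)
  have subV: "\<And>i. i<p \<Longrightarrow> P i \<subseteq> V" using cov by auto
  have finP: "\<And>i. i<p \<Longrightarrow> finite (P i)" using subV fin finite_subset by blast
  have cS: "card S = (\<Sum>i<p. card (P i)^2)"
    unfolding S_def
    apply (subst card_UN_disjoint)
    using finP dis by (auto simp: card_cartesian_product power2_eq_square)
  have SV: "S \<subseteq> V \<times> V" using subV by (auto simp: S_def)
  have finO: "finite Ob" using fin by (auto simp: Ob_def intro: finite_subset[of _ "V\<times>V"])
  have cO': "card Ob' = card Ob" unfolding Ob'_def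
    by (rule card_image) (auto simp: inj_on_def)
  have dj: "Ob \<inter> Ob' = {}" by (auto simp: Ob_def Ob'_def)
  have QO: "V \<times> V - S = Ob \<union> Ob'"
  proof
    show "V \<times> V - S \<subseteq> Ob \<union> Ob'"
    proof
      fix x assume x: "x \<in> V \<times> V - S"
      obtain u v where xuv: "x = (u,v)" by fastforce
      have nb: "\<forall>i<p. \<not>(u\<in>P i \<and> v\<in>P i)" using x xuv by (auto simp: S_def)
      have "u \<noteq> v" using x xuv cov nb by auto
      then consider "u<v" | "v<u" by fastforce
      then show "x \<in> Ob \<union> Ob'"
      proof cases
        case 1 then show ?thesis using x xuv nb by (auto simp: Ob_def)
      next
        case 2 then have "(v,u) \<in> Ob" using x xuv nb by (auto simp: Ob_def)
        then show ?thesis unfolding Ob'_def xuv by (auto intro!: image_eqI[of _ _ "(v,u)"])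
      qed
    qed
  next
    show "Ob \<union> Ob' \<subseteq> V \<times> V - S" by (auto simp: Ob_def Ob'_def S_def)
  qed
  have "card (V\<times>V - S) = card V^2 - card S"
    using SV fin by (simp add: card_Diff_subset finite_subset card_cartesian_product power2_eq_square)
  moreover have "card (V\<times>V - S) = 2 * card Ob"
    unfolding QO using dj finO cO' by (simp add: card_Un_disjoint Ob'_def)
  moreover have "card S \<le> card V^2" using SV fin
    by (metis card_cartesian_product card_mono finite_cartesian_product power2_eq_square)
  ultimately show ?thesis using cS Ob_def by simp
qed



lemma part_sum:
  assumes fin: "finite V" and part: "is_partition V p P"
  shows "(\<Sum>i<p. card (P i)) = card V"
proof -
  have cov: "(\<Union>i<p. P i) = V" and dis: "\<And>i j. i<p \<Longrightarrow> j<p \<Longrightarrow> i\<noteq>j \<Longrightarrow> P i \<inter> P j = {}"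
    using part by (auto simp: is_partition_def)
  have subV: "P i \<subseteq> V" if "i<p" for i using cov that by blast
  have finP: "finite (P i)" if "i<p" for i using subV[OF that] fin by (rule finite_subset)
  have "card (\<Union>i<p. P i) = (\<Sum>i<p. card (P i))"
    by (rule card_UN_disjoint) (use finP dis in auto)
  then show ?thesis using cov by simp
qed

lemma cs_sq:
  fixes x :: "nat \<Rightarrow> real"
  shows "(\<Sum>i<p. x i)^2 \<le> real p * (\<Sum>i<p. (x i)^2)"
  using Cauchy_Schwarz_ineq_sum[where a="\<lambda>_. 1" and b=x and I="{..<p}"] by simp

lemma cross_upper:
  fixes V :: "'a::linorder set"
  assumes fin: "finite V" and part: "is_partition V p P" and p: "p > 0"
  shows "2 * real (card {(u,v)\<in>V\<times>V. u<v \<and> (\<forall>i<p. \<not>(u\<in>P i \<and> v\<in>P i))})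
          \<le> real (card V)^2 - real (card V)^2 / real p"
proof -
  have e: "2 * real (card {(u,v)\<in>V\<times>V. u<v \<and> (\<forall>i<p. \<not>(u\<in>P i \<and> v\<in>P i))}) + (\<Sum>i<p. real (card (P i))^2) = real (card V)^2"
    using arg_cong[OF part_count[OF fin part], of real] by simp
  have "real (card V)^2 \<le> real p * (\<Sum>i<p. real (card (P i))^2)"
    using cs_sq[where p=p and x="\<lambda>i. real (card (P i))"] arg_cong[OF part_sum[OF fin part], of real] by simp
  then have "real (card V)^2 / real p \<le> (\<Sum>i<p. real (card (P i))^2)"
    using p by (subst pos_divide_le_eq) (simp_all add: mult.commute)
  then show ?thesis using e by linarith
qed

lemma turan_lower:
  assumes p: "p > 0"
  shows "real n^2 - real n^2 / real p - real n \<le> 2 * real (turan_num n p)"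
proof -
  define R where "R r = {i\<in>{0..<n}. i mod p = r}" for r
  have part: "is_partition {0..<n} p R"
    unfolding is_partition_def R_def using p by auto
  have teq: "{(i,j). i < j \<and> j < n \<and> i mod p \<noteq> j mod p} =
     {(u,v)\<in>{0..<n}\<times>{0..<n}. u<v \<and> (\<forall>i<p. \<not>(u\<in>R i \<and> v\<in>R i))}"
    unfolding R_def using p by auto
  have e: "2 * real (turan_num n p) + (\<Sum>i<p. real (card (R i))^2) = real n^2"
    using arg_cong[OF part_count[OF _ part], of real] unfolding turan_num_def teq by simp
  have cR: "card (R r) \<le> n div p + 1" for r
  proof -
    have "inj_on (\<lambda>i. i div p) (R r)"
      unfolding inj_on_def R_def by (auto) (metis div_mult_mod_eq)
    moreover have "(\<lambda>i. i div p) ` R r \<subseteq> {0..n div p}"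
      unfolding R_def by (auto intro!: div_le_mono)
    ultimately have "card (R r) \<le> card {0..n div p}"
      using card_inj_on_le by blast
    then show ?thesis by simp
  qed
  have cR': "real (card (R r)) \<le> real n / real p + 1" for r
  proof -
    have "real (n div p) \<le> real n / real p" by (simp add: of_nat_div_le_of_nat)
    moreover have "real (card (R r)) \<le> real (n div p + 1)" using cR[of r] by (simp only: of_nat_le_iff)
    ultimately show ?thesis by simp
  qed
  have "(\<Sum>i<p. real (card (R i))^2) \<le> (\<Sum>i<p. (real n / real p + 1) * real (card (R i)))"
    by (rule sum_mono) (simp add: power2_eq_square cR' mult_right_mono)
  also have "\<dots> = (real n / real p + 1) * real n"
    using arg_cong[OF part_sum[OF _ part], of real] by (simp add: sum_distrib_left[symmetric])
  also have "\<dots> = real n^2 / real p + real n" using p by (simp add: field_simps power2_eq_square)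
  finally show ?thesis using e by linarith
qed



lemma card2_minmax:
  fixes e :: "'a::linorder set"
  assumes "card e = 2"
  shows "e = {Min e, Max e} \<and> Min e < Max e"
proof -
  have "\<exists>x y. e = {x,y} \<and> x \<noteq> y" using assms by (rule card_2_iff[THEN iffD1])
  then obtain x y where e: "e = {x,y}" "x \<noteq> y" by blast
  have mn: "Min {x,y} = min x y" "Max {x,y} = max x y" by simp_all
  show ?thesis
  proof (cases "x < y")
    case True
    then have "min x y = x" "max x y = y" by simp_all
    then show ?thesis unfolding e(1) mn using True by simp
  next
    case False
    then have "y < x" using e(2) by simp
    then have "min x y = y" "max x y = x" by simp_all
    then show ?thesis unfolding e(1) mn using \<open>y < x\<close> by (simp add: insert_commute)
  qed
qed

lemma card_le_weighted:
  assumes fin: "finite B" and sub: "A \<subseteq> B" and pos: "\<And>x. x\<in>B \<Longrightarrow> g x \<ge> 0"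
    and one: "\<And>x. x\<in>A \<Longrightarrow> g x \<ge> (1::real)"
  shows "real (card A) \<le> (\<Sum>x\<in>B. g x)"
proof -
  have "real (card A) = (\<Sum>x\<in>A. 1)" by simp
  also have "\<dots> \<le> (\<Sum>x\<in>A. g x)" by (rule sum_mono) (use one in auto)
  also have "\<dots> \<le> (\<Sum>x\<in>B. g x)" by (rule sum_mono2) (use fin sub pos in auto)
  finally show ?thesis .
qed

lemma subset_count:
  assumes fin: "finite E" and FE: "F \<subseteq> E"
  shows "real (card {T\<in>Pow E. real (card (T\<inter>F)) < s}) \<le> 4 powr s * 2^(card (E - F)) * (5/4)^(card F)"
proof -
  define w where "w x = (if x \<in> F then 1/4 else (1::real))" for x
  define g where "g T = 4 powr s * (1/4::real)^(card (T\<inter>F))" for T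
  have pw: "(\<Prod>x\<in>T. w x) = (1/4)^(card (T\<inter>F))" if "T \<subseteq> E" for T
  proof -
    have fT: "finite T" using that fin finite_subset by blast
    have "(\<Prod>x\<in>T. w x) = (\<Prod>x\<in>T\<inter>{x. x\<in>F}. 1/4) * (\<Prod>x\<in>T\<inter>-{x. x\<in>F}. 1)"
      unfolding w_def by (rule prod.If_cases[OF fT])
    then show ?thesis by (simp add: Int_def)
  qed
  have "real (card {T\<in>Pow E. real (card (T\<inter>F)) < s}) \<le> (\<Sum>T\<in>Pow E. g T)"
  proof (rule card_le_weighted)
    show "finite (Pow E)" using fin by simp
    show "{T \<in> Pow E. real (card (T \<inter> F)) < s} \<subseteq> Pow E" by auto
    show "0 \<le> g T" for T by (simp add: g_def)
    show "1 \<le> g T" if "T \<in> {T \<in> Pow E. real (card (T \<inter> F)) < s}" for T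
    proof -
      have lt: "real (card (T\<inter>F)) < s" using that by auto
      have h1: "(1/4::real)^(card (T\<inter>F)) = 1 / 4 powr real (card (T\<inter>F))"
        using powr_realpow[of 4 "card (T\<inter>F)"] by (simp add: power_one_over)
      have "g T = 4 powr s * (1 / 4 powr real (card (T\<inter>F)))"
        unfolding g_def h1 by (rule refl)
      also have "\<dots> = 4 powr (s - real (card (T\<inter>F)))" by (simp add: powr_diff)
      also have "\<dots> \<ge> 1" using lt by (simp add: ge_one_powr_ge_zero)
      finally show ?thesis .
    qed
  qed
  also have "(\<Sum>T\<in>Pow E. g T) = 4 powr s * (\<Sum>T\<in>Pow E. (\<Prod>x\<in>T. w x) * (\<Prod>x\<in>E-T. 1))"
    by (simp add: g_def sum_distrib_left pw)
  also have "(\<Sum>T\<in>Pow E. (\<Prod>x\<in>T. w x) * (\<Prod>x\<in>E-T. 1)) = (\<Prod>x\<in>E. w x + 1)"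
    by (rule prod_add[OF fin, symmetric])
  also have "(\<Prod>x\<in>E. w x + 1) = (\<Prod>x\<in>E. if x \<in> F then 5/4 else (2::real))"
    by (rule prod.cong) (auto simp: w_def)
  also have "\<dots> = (\<Prod>x\<in>E \<inter> {x. x\<in>F}. 5/4) * (\<Prod>x\<in>E \<inter> -{x. x\<in>F}. 2)"
    by (rule prod.If_cases[OF fin])
  also have "E \<inter> {x. x\<in>F} = F" using FE by auto
  also have "E \<inter> -{x. x\<in>F} = E - F" by auto
  finally show ?thesis by (simp add: mult_ac)
qed



lemma orient_finite:
  assumes sg: "simple_graph V E" and D: "D \<in> orientations E"
  shows "finite D"
proof -
  have "D \<subseteq> V \<times> V" using D sg unfolding orientations_def simple_graph_def by fastforce
  then show ?thesis using sg finite_subset unfolding simple_graph_def by blast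
qed

lemma orient_D:
  assumes "D \<in> orientations E"
  shows "(\<forall>(a,b)\<in>D. {a,b} \<in> E) \<and> (\<forall>a b. {a,b} \<in> E \<longrightarrow> ((a,b) \<in> D \<longleftrightarrow> (b,a) \<notin> D))"
  using assms unfolding orientations_def by (rule CollectD)

lemma enc_key:
  assumes rE: "\<And>e. e\<in>E \<Longrightarrow> e = {fst (r e), snd (r e)}"
    and Da: "Da \<in> orientations E" and Db: "Db \<in> orientations E"
    and eq: "{e\<in>E. r e \<in> Da} = {e\<in>E. r e \<in> Db}" and x: "x \<in> Da"
  shows "x \<in> Db"
proof -
  obtain u v where xuv: "x = (u,v)" by fastforce
  have oa: "\<forall>(a,b)\<in>Da. {a,b} \<in> E"
    using orient_D[OF Da] by (rule conjunct1)
  have oa2: "\<forall>a b. {a,b} \<in> E \<longrightarrow> ((a,b) \<in> Da \<longleftrightarrow> (b,a) \<notin> Da)"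
    using orient_D[OF Da] by (rule conjunct2)
  have ob2: "\<forall>a b. {a,b} \<in> E \<longrightarrow> ((a,b) \<in> Db \<longleftrightarrow> (b,a) \<notin> Db)"
    using orient_D[OF Db] by (rule conjunct2)
  have uvD: "(u,v) \<in> Da" using x xuv by simp
  have eE: "{u,v} \<in> E" using oa uvD by auto
  have ra: "(u,v) \<in> Da \<longleftrightarrow> (v,u) \<notin> Da" using oa2 eE by blast
  have rb: "(u,v) \<in> Db \<longleftrightarrow> (v,u) \<notin> Db" using ob2 eE by blast
  obtain a b where rab: "r {u,v} = (a,b)" by fastforce
  have "{u,v} = {a,b}" using rE[OF eE] unfolding rab by simp
  then have "(u = a \<and> v = b) \<or> (u = b \<and> v = a)" by (simp only: doubleton_eq_iff)
  then have "r {u,v} = (u,v) \<or> r {u,v} = (v,u)" using rab by blast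
  then show "x \<in> Db"
  proof
    assume h: "r {u,v} = (u,v)"
    then have "{u,v} \<in> {e\<in>E. r e \<in> Da}" using uvD eE by simp
    then have "{u,v} \<in> {e\<in>E. r e \<in> Db}" using eq by simp
    then show ?thesis using h xuv by simp
  next
    assume h: "r {u,v} = (v,u)"
    have "(v,u) \<notin> Da" using ra uvD by simp
    then have "{u,v} \<notin> {e\<in>E. r e \<in> Da}" using h by simp
    then have "{u,v} \<notin> {e\<in>E. r e \<in> Db}" using eq by simp
    then have "(v,u) \<notin> Db" using h eE by simp
    then show ?thesis using rb xuv by simp
  qed
qed

lemma bad_count:
  fixes V :: "'a::linorder set"
  assumes sg: "simple_graph V E" and dj: "X1 \<inter> X2 = {}"
    and Fdef: "F = {e\<in>E. \<exists>u\<in>X1. \<exists>v\<in>X2. e = {u,v}}"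
  shows "real (card {D\<in>orientations E. real (card {(u,v)\<in>D. u\<in>X1 \<and> v\<in>X2}) < s})
     \<le> 4 powr s * 2^(card (E - F)) * (5/4)^(card F)"
proof -
  have finV: "finite V" and eV: "\<And>e. e\<in>E \<Longrightarrow> e \<subseteq> V \<and> card e = 2"
    using sg by (auto simp: simple_graph_def)
  have finE: "finite E" using finV eV by (meson Pow_iff finite_Pow_iff finite_subset subsetI)
  have FE: "F \<subseteq> E" using Fdef by auto
  define r where "r e = (if e \<in> F then (SOME x. fst x \<in> X1 \<and> snd x \<in> X2 \<and> e = {fst x, snd x}) else (Min e, Max e))" for e
  have rF: "fst (r e) \<in> X1 \<and> snd (r e) \<in> X2 \<and> e = {fst (r e), snd (r e)}" if eF: "e \<in> F" for e
  proof -
    obtain u v where "u\<in>X1" "v\<in>X2" "e = {u,v}" using eF Fdef by auto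
    then have "\<exists>x. fst x \<in> X1 \<and> snd x \<in> X2 \<and> e = {fst x, snd x}" by (intro exI[of _ "(u,v)"]) auto
    then have "let x = (SOME x. fst x \<in> X1 \<and> snd x \<in> X2 \<and> e = {fst x, snd x}) in fst x \<in> X1 \<and> snd x \<in> X2 \<and> e = {fst x, snd x}"
      unfolding Let_def by (rule someI_ex)
    moreover have "r e = (SOME x. fst x \<in> X1 \<and> snd x \<in> X2 \<and> e = {fst x, snd x})"
      using eF unfolding r_def by (rule if_P)
    ultimately show ?thesis unfolding Let_def by simp
  qed
  have rE: "e = {fst (r e), snd (r e)}" if "e \<in> E" for e
  proof (cases "e \<in> F")
    case True then show ?thesis using rF by blast
  next
    case False
    have h1: "e = {Min e, Max e}" using card2_minmax[of e] eV[OF that] by blast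
    have h2: "r e = (Min e, Max e)" using False by (simp add: r_def)
    show ?thesis unfolding h2 fst_conv snd_conv by (rule h1)
  qed
  have rinj: "inj_on r E" by (rule inj_onI) (metis rE)
  define enc where "enc D = {e\<in>E. r e \<in> D}" for D
  have encinj: "inj_on enc (orientations E)"
  proof (rule inj_onI)
    fix D1 D2 assume D1: "D1 \<in> orientations E" and D2: "D2 \<in> orientations E" and eq: "enc D1 = enc D2"
    have eq': "{e\<in>E. r e \<in> D1} = {e\<in>E. r e \<in> D2}" using eq unfolding enc_def .
    have s1: "D1 \<subseteq> D2" by (rule subsetI) (rule enc_key[OF rE D1 D2 eq'])
    have s2: "D2 \<subseteq> D1" by (rule subsetI) (rule enc_key[OF rE D2 D1 eq'[symmetric]])
    show "D1 = D2" by (rule subset_antisym[OF s1 s2])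
  qed
  define Bad where "Bad = {D\<in>orientations E. real (card {(u,v)\<in>D. u\<in>X1 \<and> v\<in>X2}) < s}"
  have le: "card (enc D \<inter> F) \<le> card {(u,v)\<in>D. u\<in>X1 \<and> v\<in>X2}" if D: "D \<in> orientations E" for D
  proof -
    have "r ` (enc D \<inter> F) \<subseteq> {(u,v)\<in>D. u\<in>X1 \<and> v\<in>X2}"
    proof
      fix y assume "y \<in> r ` (enc D \<inter> F)"
      then obtain e where e: "e \<in> enc D" "e \<in> F" "y = r e" by blast
      then have "r e \<in> D" "fst (r e) \<in> X1" "snd (r e) \<in> X2" using rF by (auto simp: enc_def)
      then show "y \<in> {(u,v)\<in>D. u\<in>X1 \<and> v\<in>X2}" using e(3) by (cases "r e") auto
    qed
    moreover have "finite {(u,v)\<in>D. u\<in>X1 \<and> v\<in>X2}"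
      using orient_finite[OF sg D] by (auto intro: finite_subset[of _ D])
    moreover have "inj_on r (enc D \<inter> F)" using rinj by (rule inj_on_subset) (auto simp: enc_def)
    ultimately show ?thesis using card_image[of r "enc D \<inter> F"] card_mono[of "{(u,v)\<in>D. u\<in>X1 \<and> v\<in>X2}" "r ` (enc D \<inter> F)"]
      by simp
  qed
  have "enc ` Bad \<subseteq> {T\<in>Pow E. real (card (T\<inter>F)) < s}"
  proof
    fix T assume "T \<in> enc ` Bad"
    then obtain D where D: "D \<in> Bad" "T = enc D" by blast
    have "real (card (T\<inter>F)) \<le> real (card {(u,v)\<in>D. u\<in>X1 \<and> v\<in>X2})"
      using le D unfolding Bad_def by simp
    then show "T \<in> {T\<in>Pow E. real (card (T\<inter>F)) < s}" using D by (auto simp: Bad_def enc_def)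
  qed
  moreover have "inj_on enc Bad" using encinj by (rule inj_on_subset) (auto simp: Bad_def)
  ultimately have "card Bad \<le> card {T\<in>Pow E. real (card (T\<inter>F)) < s}"
    using finE by (intro card_inj_on_le) auto
  then have "real (card Bad) \<le> real (card {T\<in>Pow E. real (card (T\<inter>F)) < s})" by simp
  also have "\<dots> \<le> 4 powr s * 2^(card (E - F)) * (5/4)^(card F)" by (rule subset_count[OF finE FE])
  finally show ?thesis unfolding Bad_def .
qed



lemma edge_bound:
  fixes V :: "'a::linorder set"
  assumes sg: "simple_graph V E" and part: "is_partition V p P"
    and ij: "i<p" "j<p" "i\<noteq>j" and X: "X1 \<subseteq> P i" "X2 \<subseteq> P j"
    and Fdef: "F = {e\<in>E. \<exists>u\<in>X1. \<exists>v\<in>X2. e = {u,v}}"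
  shows "card (E - F) + card X1 * card X2 \<le> (\<Sum>k<p. card (edges_in E (P k)))
          + card {(u,v)\<in>V\<times>V. u<v \<and> (\<forall>k<p. \<not>(u\<in>P k \<and> v\<in>P k))}"
proof -
  define Ob where "Ob = {(u,v)\<in>V\<times>V. u<v \<and> (\<forall>k<p. \<not>(u\<in>P k \<and> v\<in>P k))}"
  define Ein where "Ein = (\<Union>k<p. edges_in E (P k))"
  have finV: "finite V" and eV: "\<And>e. e\<in>E \<Longrightarrow> e \<subseteq> V \<and> card e = 2"
    using sg by (auto simp: simple_graph_def)
  have finE: "finite E" using finV eV by (meson Pow_iff finite_Pow_iff finite_subset subsetI)
  have cov: "(\<Union>k<p. P k) = V" and dis: "\<And>i j. i<p \<Longrightarrow> j<p \<Longrightarrow> i\<noteq>j \<Longrightarrow> P i \<inter> P j = {}"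
    using part by (auto simp: is_partition_def)
  have XV: "X1 \<subseteq> V" "X2 \<subseteq> V" using X ij cov by auto
  have dj: "X1 \<inter> X2 = {}" using dis[OF ij] X by auto
  have finO: "finite Ob" using finV by (auto simp: Ob_def intro: finite_subset[of _ "V\<times>V"])
  define phi where "phi e = (Min e, Max e)" for e :: "'a set"
  define srt where "srt x = (min (fst x) (snd x), max (fst x) (snd x))" for x :: "'a \<times> 'a"
  have A1: "phi ` (E - Ein - F) \<subseteq> Ob"
  proof
    fix x assume "x \<in> phi ` (E - Ein - F)"
    then obtain e where e: "e \<in> E" "e \<notin> Ein" "x = phi e" by blast
    have ce: "card e = 2" using eV[OF e(1)] by (rule conjunct2)
    have mm1: "e = {Min e, Max e}" using card2_minmax[OF ce] by (rule conjunct1)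
    have mm2: "Min e < Max e" using card2_minmax[OF ce] by (rule conjunct2)
    have nb: "\<forall>k<p. \<not>(Min e \<in> P k \<and> Max e \<in> P k)"
    proof (intro allI impI notI)
      fix k assume k: "k<p" and h: "Min e \<in> P k \<and> Max e \<in> P k"
      then have "e \<subseteq> P k" by (metis mm1 insert_subset empty_subsetI)
      then show False using e k by (auto simp: Ein_def edges_in_def)
    qed
    have "Min e \<in> V" "Max e \<in> V" using mm1 eV[OF e(1)] by (metis insert_subset)+
    then show "x \<in> Ob" using e(3) mm2 nb by (simp add: Ob_def phi_def)
  qed
  have A2: "srt ` (X1 \<times> X2) \<subseteq> Ob"
  proof
    fix x assume "x \<in> srt ` (X1 \<times> X2)"
    then obtain u v where uv: "u \<in> X1" "v \<in> X2" "x = srt (u,v)" by blast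
    have "u \<noteq> v" using uv dj by auto
    moreover have "\<not>(u \<in> P k \<and> v \<in> P k)" if "k<p" for k
    proof
      assume h: "u \<in> P k \<and> v \<in> P k"
      have "k = i" using dis[OF that ij(1)] h uv X by blast
      moreover have "k = j" using dis[OF that ij(2)] h uv X by blast
      ultimately show False using ij by simp
    qed
    ultimately show "x \<in> Ob" using uv XV by (auto simp: Ob_def srt_def min_def max_def)
  qed
  have A3: "phi ` (E - Ein - F) \<inter> srt ` (X1 \<times> X2) = {}"
  proof (rule ccontr)
    assume "\<not> ?thesis"
    then obtain e u v where e: "e \<in> E" "e \<notin> F" "u \<in> X1" "v \<in> X2" "phi e = srt (u,v)" by blast
    have ce: "card e = 2" using eV[OF e(1)] by (rule conjunct2)
    have mm: "e = {Min e, Max e}" using card2_minmax[OF ce] by (rule conjunct1)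
    have mv: "{min u v, max u v} = {u,v}" by (auto simp: min_def max_def)
    have p: "Min e = min u v" "Max e = max u v" using e(5) by (simp_all add: phi_def srt_def)
    have "e = {min u v, max u v}" using mm unfolding p .
    then have "e = {u,v}" using mv by (rule trans)
    then show False using e Fdef by auto
  qed
  have i1: "inj_on phi (E - Ein - F)"
  proof (rule inj_onI)
    fix e1 e2 assume e1: "e1 \<in> E - Ein - F" and e2: "e2 \<in> E - Ein - F" and eq: "phi e1 = phi e2"
    have c1: "card e1 = 2" "card e2 = 2" using eV e1 e2 by auto
    have m1: "e1 = {Min e1, Max e1}" using card2_minmax[OF c1(1)] by (rule conjunct1)
    have m2: "e2 = {Min e2, Max e2}" using card2_minmax[OF c1(2)] by (rule conjunct1)
    have q1: "Min e1 = Min e2" and q2: "Max e1 = Max e2" using eq by (simp_all add: phi_def)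
    have "e1 = {Min e2, Max e2}" using m1 unfolding q1 q2 .
    then show "e1 = e2" using m2 by (rule trans[OF _ sym])
  qed
  have i2: "inj_on srt (X1 \<times> X2)"
  proof (rule inj_onI)
    fix x y assume x: "x \<in> X1 \<times> X2" and y: "y \<in> X1 \<times> X2" and eq: "srt x = srt y"
    have mv: "\<And>a b. {min a b, max a b} = {a, b::'a}" by (auto simp: min_def max_def)
    have "{fst x, snd x} = {fst (srt x), snd (srt x)}" by (simp add: srt_def mv)
    also have "\<dots> = {fst (srt y), snd (srt y)}" using eq by simp
    also have "\<dots> = {fst y, snd y}" by (simp add: srt_def mv)
    finally have "{fst x, snd x} = {fst y, snd y}" .
    then show "x = y" using x y dj by (auto simp: doubleton_eq_iff prod_eq_iff)
  qed
  have finX: "finite X1" "finite X2" using XV finV finite_subset by blast+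
  have "card (E - Ein - F) + card X1 * card X2 = card (phi ` (E - Ein - F) \<union> srt ` (X1 \<times> X2))"
    using card_Un_disjoint[OF _ _ A3] finE finX card_image[OF i1] card_image[OF i2]
    by (simp add: card_cartesian_product)
  also have "\<dots> \<le> card Ob" using A1 A2 finO by (intro card_mono) auto
  finally have c1: "card (E - Ein - F) + card X1 * card X2 \<le> card Ob" .
  have "E - F \<subseteq> Ein \<union> (E - Ein - F)" by auto
  moreover have "finite (Ein \<union> (E - Ein - F))"
    using finE by (rule finite_subset[rotated]) (auto simp: Ein_def edges_in_def)
  ultimately have "card (E - F) \<le> card (Ein \<union> (E - Ein - F))" by (rule card_mono[rotated])
  also have "\<dots> \<le> card Ein + card (E - Ein - F)" by (rule card_Un_le)
  finally have "card (E - F) \<le> card Ein + card (E - Ein - F)" .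
  moreover have "card Ein \<le> (\<Sum>k<p. card (edges_in E (P k)))" unfolding Ein_def by (rule card_UN_le) simp
  ultimately show ?thesis using c1 unfolding Ob_def by linarith
qed



lemma pow_exp: "(x::real) > 0 \<Longrightarrow> x ^ k = exp (real k * ln x)"
  by (simp add: exp_of_nat_mult)

lemma pair_bound:
  fixes V :: "'a::linorder set"
  assumes sg: "simple_graph V E" and part: "is_partition V p P" and p: "p > 0"
    and ij: "i<p" "j<p" "i\<noteq>j" and X: "X1 \<subseteq> P i" "X2 \<subseteq> P j"
    and cV: "card V = n" and dpos: "\<delta> > 0"
    and hI: "real (\<Sum>k<p. card (edges_in E (P k))) < \<delta>^2 * real n ^ 2"
    and a: "real (card X1) > 2 * \<delta> * real n" and b: "real (card X2) > 2 * \<delta> * real n"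
  shows "real (card {D\<in>orientations E. real (card {(u,v)\<in>D. u\<in>X1 \<and> v\<in>X2}) < real (card X1) * real (card X2) / 10})
     \<le> 2 ^ (turan_num n p) * exp (ln 2 * real n / 2 - 2/5 * (\<delta>^2 * real n ^ 2))"
proof -
  define F where "F = {e\<in>E. \<exists>u\<in>X1. \<exists>v\<in>X2. e = {u,v}}"
  define A where "A = real (card X1) * real (card X2)"
  define D where "D = \<delta>^2 * real n ^ 2"
  define g where "g = card (E - F)"
  define f where "f = card F"
  define t where "t = turan_num n p"
  define Ob where "Ob = card {(u,v)\<in>V\<times>V. u<v \<and> (\<forall>k<p. \<not>(u\<in>P k \<and> v\<in>P k))}"
  define L2 where "L2 = ln (2::real)"
  define L5 where "L5 = ln (5/4::real)"
  have finV: "finite V" using sg by (simp add: simple_graph_def)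
  have cov: "(\<Union>k<p. P k) = V" and dis: "\<And>i j. i<p \<Longrightarrow> j<p \<Longrightarrow> i\<noteq>j \<Longrightarrow> P i \<inter> P j = {}"
    using part by (auto simp: is_partition_def)
  have dj: "X1 \<inter> X2 = {}" using dis[OF ij] X by auto
  have XV: "X1 \<subseteq> V" "X2 \<subseteq> V" using X ij cov by auto
  have finX: "finite X1" "finite X2" using finite_subset[OF XV(1) finV] finite_subset[OF XV(2) finV] by auto
  have bc: "real (card {D\<in>orientations E. real (card {(u,v)\<in>D. u\<in>X1 \<and> v\<in>X2}) < A / 10})
     \<le> 4 powr (A/10) * 2^g * (5/4)^f"
    unfolding g_def f_def by (rule bad_count[OF sg dj F_def])
  have eb: "g + card X1 * card X2 \<le> (\<Sum>k<p. card (edges_in E (P k))) + Ob"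
    unfolding g_def Ob_def by (rule edge_bound[OF sg part ij X F_def])
  have cu: "2 * real Ob \<le> real n^2 - real n^2 / real p"
    unfolding Ob_def using cross_upper[OF finV part p] cV by simp
  have tl: "real n^2 - real n^2 / real p - real n \<le> 2 * real t"
    unfolding t_def by (rule turan_lower[OF p])
  have fA: "f \<le> card X1 * card X2"
  proof -
    have "F \<subseteq> (\<lambda>(u,v). {u,v}) ` (X1 \<times> X2)" unfolding F_def by auto
    then have "f \<le> card ((\<lambda>(u,v). {u,v}) ` (X1 \<times> X2))" unfolding f_def
      using finX by (intro card_mono) auto
    also have "\<dots> \<le> card (X1 \<times> X2)" by (rule card_image_le) (use finX in simp)
    finally show ?thesis by (simp add: card_cartesian_product)
  qed
  have fA': "real f \<le> A" unfolding A_def using fA by (metis of_nat_le_iff of_nat_mult)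
  have gb: "real g \<le> D + real t + real n / 2 - A"
  proof -
    have "real g + A \<le> real (\<Sum>k<p. card (edges_in E (P k))) + real Ob"
      unfolding A_def using eb by (metis of_nat_add of_nat_le_iff of_nat_mult)
    then show ?thesis using hI cu tl unfolding D_def by linarith
  qed
  have dn: "0 \<le> 2 * \<delta> * real n" using dpos by simp
  have A4: "4 * D \<le> A"
  proof -
    have "(2 * \<delta> * real n) * (2 * \<delta> * real n) \<le> real (card X1) * real (card X2)"
      using a b dn by (intro mult_mono) auto
    then show ?thesis unfolding A_def D_def by (simp add: power2_eq_square algebra_simps)
  qed
  have L2b: "2/3 \<le> L2" "L2 \<le> 25/36" unfolding L2_def using ln2_ge_two_thirds ln2_le_25_over_36 by auto
  have L5b: "0 \<le> L5" "L5 \<le> 1/4" unfolding L5_def using ln_le_minus_one[of "5/4::real"] by auto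
  have D0: "0 \<le> D" unfolding D_def by simp
  have ln4: "ln (4::real) = 2 * L2" unfolding L2_def using ln_mult[of 2 2] by simp
  have h1: "real f * L5 \<le> A / 4"
  proof -
    have "real f * L5 \<le> A * L5" using fA' L5b by (intro mult_right_mono) auto
    also have "\<dots> \<le> A * (1/4)" using L5b A4 D0 by (intro mult_left_mono) auto
    finally show ?thesis by simp
  qed
  have h2: "real g * L2 \<le> (D + real t + real n / 2 - A) * L2"
    using gb L2b by (intro mult_right_mono) auto
  have h3: "4 * D * (4/5 * L2 - 1/4) \<le> A * (4/5 * L2 - 1/4)"
    using A4 L2b by (intro mult_right_mono) auto
  have h4: "D * (2/3) \<le> D * L2" using D0 L2b by (intro mult_left_mono) auto
  have key: "A/10 * ln 4 + real g * L2 + real f * L5 \<le> real t * L2 + L2 * real n / 2 - 2/5 * D"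
    using h1 h2 h3 h4 D0 unfolding ln4 by (simp add: algebra_simps)
  have "4 powr (A/10) * 2^g * (5/4)^f = exp (A/10 * ln 4 + real g * L2 + real f * L5)"
    unfolding powr_def L2_def L5_def by (simp add: pow_exp exp_add)
  also have "\<dots> \<le> exp (real t * L2 + L2 * real n / 2 - 2/5 * D)" using key by simp
  also have "\<dots> = 2 ^ t * exp (ln 2 * real n / 2 - 2/5 * D)"
    unfolding L2_def by (simp add: pow_exp exp_add[symmetric] exp_diff[symmetric] algebra_simps)
  finally show ?thesis using bc unfolding A_def D_def t_def by simp
qed

lemma real_card_UN_le:
  assumes "finite I" and "\<And>i. i\<in>I \<Longrightarrow> real (card (A i)) \<le> b i"
  shows "real (card (\<Union>i\<in>I. A i)) \<le> (\<Sum>i\<in>I. b i)"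
proof -
  have "card (\<Union>i\<in>I. A i) \<le> (\<Sum>i\<in>I. card (A i))" by (rule card_UN_le[OF assms(1)])
  then have "real (card (\<Union>i\<in>I. A i)) \<le> (\<Sum>i\<in>I. real (card (A i)))"
    by (metis of_nat_le_iff of_nat_sum)
  also have "\<dots> \<le> (\<Sum>i\<in>I. b i)" by (rule sum_mono) (rule assms(2))
  finally show ?thesis .
qed

lemma final_ineq:
  fixes c :: real and p n :: nat
  assumes c: "c > 0" and p: "p > 0"
    and n: "real n \<ge> (ln (2 * real p^2) + 3) / c + 1"
  shows "2 * (real p * real p * 2^n * 2^n) * exp (ln 2 * real n / 2 - c * real n ^ 2) \<le> 1"
proof -
  define K where "K = ln (2 * real p^2)"
  have p1: "1 \<le> real p" using p by simp
  have p2: "1 \<le> real p ^ 2" using p1 by (rule one_le_power)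
  have K0: "0 \<le> K" unfolding K_def using p2 by simp
  have q0: "0 \<le> (K + 3) / c" using K0 c by simp
  have n1: "1 \<le> real n" using n q0 unfolding K_def by linarith
  have "c * ((K + 3) / c + 1) \<le> c * real n" using n c unfolding K_def by (intro mult_left_mono) auto
  moreover have "c * ((K + 3) / c + 1) = K + 3 + c" using c by (simp add: field_simps)
  ultimately have cn: "K + 3 \<le> c * real n" using c by linarith
  have m1: "(K + 3) * real n \<le> (c * real n) * real n" using cn n1 by (intro mult_right_mono) auto
  have m2: "K * 1 \<le> K * real n" using n1 K0 by (rule mult_left_mono)
  have big: "K + 3 * real n \<le> c * real n ^ 2"
    using m1 m2 by (simp add: power2_eq_square algebra_simps)
  have L2: "ln (2::real) \<le> 25/36" by (rule ln2_le_25_over_36)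
  have m3: "ln 2 * real n \<le> 25/36 * real n" using L2 by (rule mult_right_mono) simp
  have e1: "2 * (real p * real p) = exp K" unfolding K_def using p by (simp add: power2_eq_square)
  have e2: "(2::real)^n * 2^n = exp (real n * (2 * ln 2))"
    by (simp add: pow_exp exp_add[symmetric] algebra_simps)
  define X where "X = exp (ln 2 * real n / 2 - c * real n ^ 2)"
  have "2 * (real p * real p * 2^n * 2^n) * X = (2 * (real p * real p)) * (((2::real)^n * 2^n) * X)"
    by (simp add: mult_ac)
  also have "\<dots> = exp K * (exp (real n * (2 * ln 2)) * X)" by (simp only: e1 e2)
  also have "\<dots> = exp (K + real n * (2 * ln 2) + (ln 2 * real n / 2 - c * real n ^ 2))"
    unfolding X_def exp_add by (simp only: mult.assoc)
  also have "\<dots> \<le> exp 0"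
  proof (subst exp_le_cancel_iff)
    show "K + real n * (2 * ln 2) + (ln 2 * real n / 2 - c * real n ^ 2) \<le> 0"
      using big m3 by (simp add: algebra_simps)
  qed
  finally show ?thesis unfolding X_def by simp
qed



lemma orient_fin:
  assumes sg: "simple_graph V E"
  shows "finite (orientations E)"
proof -
  have "orientations E \<subseteq> Pow (V \<times> V)"
  proof
    fix D assume D: "D \<in> orientations E"
    have "\<forall>(a,b)\<in>D. {a,b} \<in> E" using orient_D[OF D] by (rule conjunct1)
    moreover have "\<And>e. e \<in> E \<Longrightarrow> e \<subseteq> V" using sg by (simp add: simple_graph_def)
    ultimately show "D \<in> Pow (V \<times> V)" by fastforce
  qed
  moreover have "finite (Pow (V \<times> V))" using sg by (simp add: simple_graph_def)
  ultimately show ?thesis by (rule finite_subset)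
qed

theorem mainTheorem9:
  fixes p :: nat and \<delta> :: real
  assumes "p \<ge> 2" and "\<delta> > 0"
  shows "\<exists>N. \<forall>n \<ge> N. \<forall>(V :: nat set) E P.
           simple_graph V E \<longrightarrow> card V = n \<longrightarrow> is_partition V p P \<longrightarrow>
           real (\<Sum>i<p. card (edges_in E (P i))) < \<delta>^2 * real n ^ 2 \<longrightarrow>
           card {D \<in> orientations E. \<not> relevant n \<delta> p P D} \<le> 2 ^ (turan_num n p - 1)"
proof -
  have p0: "p > 0" using assms(1) by simp
  define c where "c = 2/5 * \<delta>^2"
  have c0: "c > 0" unfolding c_def using assms(2) by simp
  obtain N :: nat where N: "(ln (2 * real p^2) + 3) / c + 1 \<le> real N" using real_arch_simple by blast
  show ?thesis
  proof (intro exI[of _ N] allI impI)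
    fix n :: nat and V :: "nat set" and E P
    assume nN: "n \<ge> N" and sg: "simple_graph V E" and cV: "card V = n" and part: "is_partition V p P"
      and hI: "real (\<Sum>i<p. card (edges_in E (P i))) < \<delta>^2 * real n ^ 2"
    have finV: "finite V" using sg by (simp add: simple_graph_def)
    have cov: "(\<Union>k<p. P k) = V" using part by (simp add: is_partition_def)
    define t where "t = turan_num n p"
    define Bnd where "Bnd = 2 ^ t * exp (ln 2 * real n / 2 - 2/5 * (\<delta>^2 * real n ^ 2))"
    define Q where "Q i j X1 X2 = (if i \<noteq> j \<and> X1 \<subseteq> P i \<and> X2 \<subseteq> P j \<and> real (card X1) > 2 * \<delta> * real n
        \<and> real (card X2) > 2 * \<delta> * real n
      then {D\<in>orientations E. real (card {(u,v)\<in>D. u\<in>X1 \<and> v\<in>X2}) < real (card X1) * real (card X2) / 10}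
      else {})" for i j X1 X2
    have B0: "0 \<le> Bnd" unfolding Bnd_def by simp
    have QB: "real (card (Q i j X1 X2)) \<le> Bnd" if ij: "i<p" "j<p" for i j X1 X2
    proof (cases "i \<noteq> j \<and> X1 \<subseteq> P i \<and> X2 \<subseteq> P j \<and> real (card X1) > 2 * \<delta> * real n
        \<and> real (card X2) > 2 * \<delta> * real n")
      case True
      then have "Q i j X1 X2 = {D\<in>orientations E. real (card {(u,v)\<in>D. u\<in>X1 \<and> v\<in>X2}) < real (card X1) * real (card X2) / 10}"
        unfolding Q_def by (rule if_P)
      moreover have "real (card {D\<in>orientations E. real (card {(u,v)\<in>D. u\<in>X1 \<and> v\<in>X2}) < real (card X1) * real (card X2) / 10}) \<le> Bnd"
        unfolding Bnd_def t_def
        using True by (intro pair_bound[OF sg part p0 ij _ _ _ cV assms(2) hI]) auto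
      ultimately show ?thesis by simp
    next
      case False
      then have "Q i j X1 X2 = {}" unfolding Q_def by (rule if_not_P)
      then show ?thesis using B0 by simp
    qed
    have sub: "{D \<in> orientations E. \<not> relevant n \<delta> p P D} \<subseteq>
      (\<Union>i\<in>{..<p}. \<Union>j\<in>{..<p}. \<Union>X1\<in>Pow V. \<Union>X2\<in>Pow V. Q i j X1 X2)"
    proof
      fix D assume D: "D \<in> {D \<in> orientations E. \<not> relevant n \<delta> p P D}"
      then obtain i j X1 X2 where ij: "i<p" "j<p" "i\<noteq>j" and X: "X1 \<subseteq> P i" "X2 \<subseteq> P j"
        and a: "real (card X1) > 2 * \<delta> * real n" and b: "real (card X2) > 2 * \<delta> * real n"
        and lt: "\<not> real (card {(u,v) \<in> D. u \<in> X1 \<and> v \<in> X2}) \<ge> real (card X1) * real (card X2) / 10"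
        unfolding relevant_def by blast
      have XV: "X1 \<in> Pow V" "X2 \<in> Pow V" using X ij cov by auto
      have "D \<in> Q i j X1 X2" unfolding Q_def using ij X a b lt D by auto
      then show "D \<in> (\<Union>i\<in>{..<p}. \<Union>j\<in>{..<p}. \<Union>X1\<in>Pow V. \<Union>X2\<in>Pow V. Q i j X1 X2)"
        using ij XV by blast
    qed
    have finU: "finite (\<Union>i\<in>{..<p}. \<Union>j\<in>{..<p}. \<Union>X1\<in>Pow V. \<Union>X2\<in>Pow V. Q i j X1 X2)"
      by (rule finite_subset[OF _ orient_fin[OF sg]]) (auto simp: Q_def)
    have "real (card {D \<in> orientations E. \<not> relevant n \<delta> p P D})
        \<le> real (card (\<Union>i\<in>{..<p}. \<Union>j\<in>{..<p}. \<Union>X1\<in>Pow V. \<Union>X2\<in>Pow V. Q i j X1 X2))"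
      using card_mono[OF finU sub] by simp
    also have "\<dots> \<le> (\<Sum>i\<in>{..<p}. \<Sum>j\<in>{..<p}. \<Sum>X1\<in>Pow V. \<Sum>X2\<in>Pow V. Bnd)"
      by (intro real_card_UN_le) (use finV QB in auto)
    also have "\<dots> = real p * real p * 2^n * 2^n * Bnd"
      using finV cV by (simp add: card_Pow)
    also have "\<dots> = 2 ^ t * (real p * real p * 2^n * 2^n * exp (ln 2 * real n / 2 - c * real n ^ 2))"
      unfolding Bnd_def c_def by (simp add: mult_ac)
    also have "\<dots> \<le> 2 ^ t * (1/2)"
    proof (rule mult_left_mono)
      have "real n \<ge> (ln (2 * real p^2) + 3) / c + 1" using N nN by linarith
      from final_ineq[OF c0 p0 this]
      show "real p * real p * 2^n * 2^n * exp (ln 2 * real n / 2 - c * real n ^ 2) \<le> 1/2" by simp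
    qed simp
    also have "\<dots> \<le> real (2 ^ (t - 1))"
    proof (cases t)
      case 0 then show ?thesis by simp
    next
      case (Suc k) then show ?thesis by simp
    qed
    finally show "card {D \<in> orientations E. \<not> relevant n \<delta> p P D} \<le> 2 ^ (turan_num n p - 1)"
      unfolding t_def by (simp only: of_nat_le_iff)
  qed
qed

end
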